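(* Let $\mathcal A\in\mathbb R^{n_1}\otimes\cdots\otimes\mathbb R^{n_k}$, $1\le s\le k$, $2\le r\le\min\{n_1,\dots,n_s\}$. Let $U=(U^{(1)},\dots,U^{(k)})\in\mathrm V(r,n_1)\times\cdots\times\mathrm V(r,n_s)\times\mathrm B(r,n_{s+1})\times\cdots\times\mathrm B(r,n_k)$ be a KKT point of $\mathrm{mLRPOTA}(r)$ and let $1\le j\le r$. Let $\hat U=(\hat U^{(1)},\dots,\hat U^{(k)})\in\mathrm V(r-1,n_1)\times\cdots\times\mathrm V(r-1,n_s)\times\mathrm B(r-1,n_{s+1})\times\cdots\times\mathrm B(r-1,n_k)$, where $\hat U^{(i)}$ is obtained from $U^{(i)}$ by deleting its $j$-th column. If $\lambda_j(U)=0$, then $\hat U$ is a KKT point of $\mathrm{mLRPOTA}(r-1)$.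
   Context: $\mathrm V(t,n)=\{U\in\mathbb R^{n\times t}:U^{\mathsf T}U=I_t\}$; $\mathrm B(t,n)$: $n\times t$ real matrices with unit columns. For $U=(U^{(1)},\dots,U^{(k)})$, $U^{(i)}\in\mathbb R^{n_i\times t}$ with columns $\mathbf u^{(i)}_j$: $\lambda_j(U)=\langle\mathcal A,\mathbf u^{(1)}_j\otimes\cdots\otimes\mathbf u^{(k)}_j\rangle$; $\mathbf v^{(i)}_j\in\mathbb R^{n_i}$ is the contraction of $\mathcal A$ with $\mathbf u^{(l)}_j$ for all $l\ne i$; $V^{(i)}=[\mathbf v^{(i)}_1,\dots,\mathbf v^{(i)}_t]$; $\Lambda=\operatorname{diag}(\lambda_1(U),\dots,\lambda_t(U))$. Problem $\mathrm{mLRPOTA}(t)$: maximize $\sum_{j=1}^t\lambda_j(U)^2$ over $\mathrm V(t,n_1)\times\cdots\times\mathrm V(t,n_s)\times\mathrm B(t,n_{s+1})\times\cdots\times\mathrm B(t,n_k)$. A feasible $U$ is a KKT point iff there exist symmetric $P_1,\dots,P_s\in\mathbb R^{t\times t}$ and $\mathbf p\in\mathbb R^t$ with $V^{(i)}\Lambda=U^{(i)}P_i$ ($i\le s$) and $V^{(i)}\Lambda=U^{(i)}\operatorname{diag}(\mathbf p)$ ($i>s$) (the Lagrange/KKT conditions of the problem). *)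

theory Defs
  imports "HOL-Analysis.Analysis"
begin

(* Conventions (0-indexed):
   - modes i < k, mode i has dimension n i;
   - a tensor A is a real function on multi-indices idx \<in> PiE {..<k} (\<lambda>i. {..<n i});
   - a factor matrix U i :: nat \<Rightarrow> nat \<Rightarrow> real has entry U i a c (row a < n i, column c < t);
   - the first s modes (i < s) carry Stiefel constraints, the remaining ones unit-column constraints. *)

type_synonym tensor = "(nat \<Rightarrow> nat) \<Rightarrow> real"
type_synonym factors = "nat \<Rightarrow> nat \<Rightarrow> nat \<Rightarrow> real"

definition multi_idx :: "nat \<Rightarrow> (nat \<Rightarrow> nat) \<Rightarrow> (nat \<Rightarrow> nat) set" where
  "multi_idx k n = PiE {..<k} (\<lambda>i. {..<n i})"

definition stiefel :: "nat \<Rightarrow> nat \<Rightarrow> (nat \<Rightarrow> nat \<Rightarrow> real) \<Rightarrow> bool" where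
  "stiefel t m M \<longleftrightarrow> (\<forall>c<t. \<forall>d<t. (\<Sum>a<m. M a c * M a d) = (if c = d then 1 else 0))"

definition unit_cols :: "nat \<Rightarrow> nat \<Rightarrow> (nat \<Rightarrow> nat \<Rightarrow> real) \<Rightarrow> bool" where
  "unit_cols t m M \<longleftrightarrow> (\<forall>c<t. (\<Sum>a<m. (M a c)\<^sup>2) = 1)"

definition feasible :: "nat \<Rightarrow> nat \<Rightarrow> (nat \<Rightarrow> nat) \<Rightarrow> nat \<Rightarrow> factors \<Rightarrow> bool" where
  "feasible k s n t U \<longleftrightarrow>
     (\<forall>i<s. stiefel t (n i) (U i)) \<and> (\<forall>i. s \<le> i \<and> i < k \<longrightarrow> unit_cols t (n i) (U i))"

definition lam :: "nat \<Rightarrow> (nat \<Rightarrow> nat) \<Rightarrow> tensor \<Rightarrow> factors \<Rightarrow> nat \<Rightarrow> real" where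
  "lam k n A U j = (\<Sum>idx\<in>multi_idx k n. A idx * (\<Prod>l<k. U l (idx l) j))"

definition vvec :: "nat \<Rightarrow> (nat \<Rightarrow> nat) \<Rightarrow> tensor \<Rightarrow> factors \<Rightarrow> nat \<Rightarrow> nat \<Rightarrow> nat \<Rightarrow> real" where
  "vvec k n A U i j a =
     (\<Sum>idx\<in>{idx\<in>multi_idx k n. idx i = a}. A idx * (\<Prod>l\<in>{..<k} - {i}. U l (idx l) j))"

definition KKT :: "nat \<Rightarrow> nat \<Rightarrow> (nat \<Rightarrow> nat) \<Rightarrow> tensor \<Rightarrow> nat \<Rightarrow> factors \<Rightarrow> bool" where
  "KKT k s n A t U \<longleftrightarrow> feasible k s n t U \<and>
     (\<exists>P :: nat \<Rightarrow> nat \<Rightarrow> nat \<Rightarrow> real. \<exists>p :: nat \<Rightarrow> real.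
        (\<forall>i<s. \<forall>c<t. \<forall>d<t. P i c d = P i d c) \<and>
        (\<forall>i<s. \<forall>a<n i. \<forall>c<t.
           vvec k n A U i c a * lam k n A U c = (\<Sum>d<t. U i a d * P i d c)) \<and>
        (\<forall>i. s \<le> i \<and> i < k \<longrightarrow> (\<forall>a<n i. \<forall>c<t.
           vvec k n A U i c a * lam k n A U c = U i a c * p c)))"

definition del_col :: "nat \<Rightarrow> factors \<Rightarrow> factors" where
  "del_col j U = (\<lambda>i a c. U i a (if c < j then c else Suc c))"

end

theory Submission
  imports Defs
begin

definition sg :: "nat \<Rightarrow> nat \<Rightarrow> nat" where
  "sg j c = (if c < j then c else Suc c)"

lemma sg_inj: "inj_on (sg j) X"
  by (auto simp: inj_on_def sg_def split: if_splits)

lemma sg_img: "j < r \<Longrightarrow> sg j ` {..<r-1} = {..<r} - {j}"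
proof (rule set_eqI, rule iffI)
  fix x assume "j < r" "x \<in> sg j ` {..<r-1}" then show "x \<in> {..<r} - {j}"
    by (auto simp: sg_def split: if_splits)
next
  fix x assume a: "j < r" "x \<in> {..<r} - {j}"
  show "x \<in> sg j ` {..<r-1}"
  proof (cases "x < j")
    case True then show ?thesis using a by (intro image_eqI[of _ _ x]) (auto simp: sg_def)
  next
    case False then show ?thesis using a by (intro image_eqI[of _ _ "x - 1"]) (auto simp: sg_def)
  qed
qed

lemma sum_skip: "j < r \<Longrightarrow> (\<Sum>d<r. f d) = f j + (\<Sum>d<r-1. f (sg j d))"
proof -
  assume j: "j < r"
  have "(\<Sum>d<r. f d) = f j + sum f ({..<r} - {j})" using j by (simp add: sum.remove)
  also have "sum f ({..<r} - {j}) = sum f (sg j ` {..<r-1})" using sg_img[OF j] by simp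
  also have "\<dots> = (\<Sum>d<r-1. f (sg j d))" by (simp add: sum.reindex[OF sg_inj])
  finally show ?thesis .
qed

lemma sg_lt: "j < r \<Longrightarrow> c < r - 1 \<Longrightarrow> sg j c < r" by (auto simp: sg_def)
lemma sg_ne: "sg j c \<noteq> j" by (auto simp: sg_def)
lemma sg_eq: "sg j c = sg j d \<longleftrightarrow> c = d" by (auto simp: sg_def)

lemma del_col_sg: "del_col j U = (\<lambda>i a c. U i a (sg j c))"
  by (simp add: del_col_def sg_def)

lemma lam_del: "lam k n A (del_col j U) c = lam k n A U (sg j c)"
  by (simp add: lam_def del_col_sg)

lemma vvec_del: "vvec k n A (del_col j U) i c a = vvec k n A U i (sg j c) a"
  by (simp add: vvec_def del_col_sg)

theorem proposition4p3:
  fixes k s r j :: nat and n :: "nat \<Rightarrow> nat" and A :: tensor and U :: factors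
  assumes "1 \<le> s" and "s \<le> k"
    and "2 \<le> r" and "\<forall>i<s. r \<le> n i"
    and "KKT k s n A r U"
    and "j < r"
    and "lam k n A U j = 0"
  shows "KKT k s n A (r - 1) (del_col j U)"
proof -
  have j: "j < r" by fact
  from assms(5) obtain P p where
    fe: "feasible k s n r U" and
    Psym: "\<forall>i<s. \<forall>c<r. \<forall>d<r. P i c d = P i d c" and
    PE: "\<forall>i<s. \<forall>a<n i. \<forall>c<r. vvec k n A U i c a * lam k n A U c = (\<Sum>d<r. U i a d * P i d c)" and
    pE: "\<forall>i. s \<le> i \<and> i < k \<longrightarrow> (\<forall>a<n i. \<forall>c<r. vvec k n A U i c a * lam k n A U c = U i a c * p c)"
    unfolding KKT_def by blast
  have st: "stiefel r (n i) (U i)" if "i < s" for i using fe that by (simp add: feasible_def)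
  have Pform: "P i d c = (\<Sum>a<n i. U i a d * (vvec k n A U i c a * lam k n A U c))"
    if i: "i < s" and d: "d < r" and c: "c < r" for i d c
  proof -
    have "(\<Sum>a<n i. U i a d * (vvec k n A U i c a * lam k n A U c))
        = (\<Sum>a<n i. U i a d * (\<Sum>e<r. U i a e * P i e c))"
      using PE i c by (intro sum.cong) auto
    also have "\<dots> = (\<Sum>e<r. (\<Sum>a<n i. U i a d * U i a e) * P i e c)"
      by (simp add: sum_distrib_left sum_distrib_right mult.assoc sum.swap[of _ "{..<n i}"])
    also have "\<dots> = (\<Sum>e<r. (if d = e then P i e c else 0))"
      using st[OF i] d unfolding stiefel_def by (intro sum.cong) auto
    also have "\<dots> = P i d c" using d by simp
    finally show ?thesis by simp
  qed
  have Pj: "P i j c = 0" if i: "i < s" and c: "c < r" for i c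
    using Psym i c j Pform[OF i c j] assms(7) by simp
  show ?thesis
    unfolding KKT_def
  proof (intro conjI exI[of _ "\<lambda>i c d. P i (sg j c) (sg j d)"] exI[of _ "\<lambda>c. p (sg j c)"])
    show "feasible k s n (r - 1) (del_col j U)"
      using fe unfolding feasible_def stiefel_def unit_cols_def del_col_sg
      by (auto simp: sg_lt[OF j] sg_eq)
    show "\<forall>i<s. \<forall>c<r - 1. \<forall>d<r - 1. P i (sg j c) (sg j d) = P i (sg j d) (sg j c)"
      using Psym sg_lt[OF j] by blast
    show "\<forall>i<s. \<forall>a<n i. \<forall>c<r - 1. vvec k n A (del_col j U) i c a * lam k n A (del_col j U) c
        = (\<Sum>d<r - 1. del_col j U i a d * P i (sg j d) (sg j c))"
    proof (intro allI impI)
      fix i a c assume i: "i < s" and a: "a < n i" and c: "c < r - 1"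
      have "vvec k n A (del_col j U) i c a * lam k n A (del_col j U) c
          = (\<Sum>d<r. U i a d * P i d (sg j c))"
        using PE i a sg_lt[OF j c] by (simp add: vvec_del lam_del)
      also have "\<dots> = (\<Sum>d<r - 1. U i a (sg j d) * P i (sg j d) (sg j c))"
        using sum_skip[OF j, of "\<lambda>d. U i a d * P i d (sg j c)"] Pj[OF i sg_lt[OF j c]] by simp
      finally show "vvec k n A (del_col j U) i c a * lam k n A (del_col j U) c
        = (\<Sum>d<r - 1. del_col j U i a d * P i (sg j d) (sg j c))" by (simp add: del_col_sg)
    qed
    show "\<forall>i. s \<le> i \<and> i < k \<longrightarrow> (\<forall>a<n i. \<forall>c<r - 1.
        vvec k n A (del_col j U) i c a * lam k n A (del_col j U) c = del_col j U i a c * p (sg j c))"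
      unfolding vvec_del lam_del using pE sg_lt[OF j] by (simp add: del_col_sg)
  qed
qed

end
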